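(* Let $d,k$ be integers with $2\leq d\leq\frac{k+1}{2}$, $\Sigma_k=\{\sigma_1,\ldots,\sigma_k\}$, $\Sigma_d=\{\sigma_1,\ldots,\sigma_d\}$, $n\geq1$, and let $\mathcal{G}\subseteq\Sigma_k^n$. Put $\mathcal{G}'=\mathcal{G}\cap\Sigma_d^n$ and $\mathcal{G}''=\{f(g_1)f(g_2)\cdots f(g_n)\mid g=g_1\cdots g_n\in\mathcal{G}\}$, where $f:\Sigma_k\to\Sigma_k$ is $f(\sigma_i)=\sigma_{\max\{i,d\}}$. Suppose $\mathcal{G}$ is closed under replacing $\sigma_i$ by $\sigma_j$ for any $i>d$ and $j\in[k]$, i.e. whenever $g\in\mathcal{G}$ has the letter $\sigma_i$ with $i>d$ in some coordinate, the word obtained by changing that coordinate to any letter of $\Sigma_k$ also lies in $\mathcal{G}$. Then either $|\mathcal{G}'|=|\mathcal{G}''|=0$ or $\log_{k-d+1}|\mathcal{G}''|\leq\log_d|\mathcal{G}'|$. *)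

theory Defs
  imports Complex_Main
begin

text \<open>Letters sigma_i are encoded by the natural number i; words of length n over
  Sigma_k are lists of length n with entries in {1..k}.\<close>

definition words :: "nat \<Rightarrow> nat \<Rightarrow> nat list set" where
  "words k n = {w. length w = n \<and> set w \<subseteq> {1..k}}"

definition fmap :: "nat \<Rightarrow> nat \<Rightarrow> nat" where
  "fmap d i = max i d"

end

theory Submission
  imports Defs
begin

lemma finite_words: "finite (words k n)"
  unfolding words_def
  by (rule finite_subset[OF _ finite_lists_length_eq[of "{1..k}" n]]) auto

lemma counting:
  "finite I \<Longrightarrow> I \<noteq> {} \<Longrightarrow> (\<forall>a\<in>I. finite (A a) \<and> B \<subseteq> A a) \<Longrightarrow>
   card (\<Union>a\<in>I. A a) + (card I - 1) * card B \<le> (\<Sum>a\<in>I. card (A a))"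
proof (induction I rule: finite_ne_induct)
  case (singleton x) then show ?case by simp
next
  case (insert i I)
  let ?U = "\<Union>a\<in>I. A a"
  have fU: "finite ?U" using insert.prems insert.hyps(1) by auto
  have fAi: "finite (A i)" and BAi: "B \<subseteq> A i" using insert.prems by auto
  have "B \<subseteq> ?U" using insert.prems insert.hyps(2) by blast
  hence "B \<subseteq> A i \<inter> ?U" using BAi by blast
  hence cB: "card B \<le> card (A i \<inter> ?U)" using fU by (intro card_mono) auto
  have cu: "card (A i \<union> ?U) + card (A i \<inter> ?U) = card (A i) + card ?U"
    using card_Un_Int[OF fAi fU] by linarith
  have cI: "card I \<ge> 1" using insert.hyps(1,2) by (simp add: Suc_le_eq card_gt_0_iff)
  have eq: "card I * card B = (card I - 1) * card B + card B"
  proof -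
    obtain m where "card I = Suc m" using cI by (cases "card I") auto
    thus ?thesis by simp
  qed
  have IH: "card ?U + (card I - 1) * card B \<le> (\<Sum>a\<in>I. card (A a))" using insert.IH insert.prems by auto
  have s1: "(\<Sum>a\<in>insert i I. card (A a)) = card (A i) + (\<Sum>a\<in>I. card (A a))"
    using insert.hyps(1,3) by (rule sum.insert)
  have s2: "card (insert i I) - 1 = card I" using insert.hyps(1,3) by simp
  have s3: "(\<Union>a\<in>insert i I. A a) = A i \<union> ?U" by simp
  show ?case unfolding s1 s2 s3 using IH cB cu eq by linarith
qed


lemma key_ineq:
  fixes u v a c :: real
  assumes "0 \<le> v" "v \<le> u" "1 \<le> a" "0 \<le> c"
  shows "u powr a + ((1+c) powr a - 1) * v powr a \<le> (u + c*v) powr a"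
proof (cases "v = 0")
  case True then show ?thesis using assms by simp
next
  case False
  hence v: "v > 0" using assms by simp
  define s where "s = u / v"
  have s1: "1 \<le> s" using v assms by (simp add: s_def)
  have sv: "s * v = u" using v by (simp add: s_def)
  have "(\<lambda>x. (x+c) powr a - x powr a) 1 \<le> (\<lambda>x. (x+c) powr a - x powr a) s"
  proof (rule DERIV_nonneg_imp_nondecreasing[OF s1])
    fix x :: real assume x0: "1 \<le> x" "x \<le> s"
    hence x: "1 \<le> x \<and> x \<le> s" by simp
    have d: "((\<lambda>x. (x+c) powr a - x powr a) has_real_derivative
            a * (x+c) powr (a-1) - a * x powr (a-1)) (at x)"
      using x assms by (auto intro!: derivative_eq_intros)
    have "x powr (a-1) \<le> (x+c) powr (a-1)"
      using x assms by (intro powr_mono2) auto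
    hence "a * (x+c) powr (a-1) - a * x powr (a-1) \<ge> 0" using assms by simp
    with d show "\<exists>y. ((\<lambda>x. (x+c) powr a - x powr a) has_real_derivative y) (at x) \<and> 0 \<le> y"
      by blast
  qed
  hence mono: "(1+c) powr a - 1 \<le> (s+c) powr a - s powr a" by simp
  have "((1+c) powr a - 1) * v powr a \<le> ((s+c) powr a - s powr a) * v powr a"
    using mono by (intro mult_right_mono) auto
  also have "\<dots> = ((s+c)*v) powr a - (s*v) powr a"
    using v s1 assms by (simp add: powr_mult left_diff_distrib)
  also have "\<dots> = (u + c*v) powr a - u powr a" using sv by (simp add: algebra_simps)
  finally show ?thesis by simp
qed

lemma main:
  fixes d k :: nat and a :: real
  assumes d2: "2 \<le> d" and dk: "d + 1 \<le> k" and a1: "1 \<le> a"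
    and da: "real d powr a = real (k - d + 1)"
  shows "G \<subseteq> words k n \<Longrightarrow>
    (\<forall>g p j. g \<in> G \<longrightarrow> p < n \<longrightarrow> g ! p > d \<longrightarrow> j \<in> {1..k} \<longrightarrow> g[p := j] \<in> G) \<Longrightarrow>
    real (card (map (fmap d) ` G)) \<le> real (card (G \<inter> words d n)) powr a"
proof (induction n arbitrary: G)
  case 0
  have w: "words m 0 = {[]}" for m by (auto simp: words_def)
  have "G = {} \<or> G = {[]}" using 0 w by auto
  then show ?case using w a1 by auto
next
  case (Suc n)
  let ?f = "map (fmap d)"
  let ?W = "words d n"
  define S where "S b = {t. b # t \<in> G}" for b
  define H where "H = (\<Union>b\<in>{1..d}. S b)"
  define F where "F = S (d+1)"
  have Sw: "S b \<subseteq> words k n" for b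
  proof
    fix t assume "t \<in> S b"
    hence "b # t \<in> words k (Suc n)" using Suc.prems(1) by (auto simp: S_def)
    thus "t \<in> words k n" by (simp add: words_def)
  qed
  have Scl: "\<forall>t p j. t \<in> S b \<longrightarrow> p < n \<longrightarrow> t!p > d \<longrightarrow> j \<in> {1..k} \<longrightarrow> t[p:=j] \<in> S b" for b
  proof (intro allI impI)
    fix t p j assume h: "t \<in> S b" "p < n" "t!p > d" "j \<in> {1..k}"
    have "(b#t)[Suc p := j] \<in> G" using Suc.prems(2)[rule_format, of "b#t" "Suc p" j] h by (auto simp: S_def)
    thus "t[p:=j] \<in> S b" by (simp add: S_def)
  qed
  have Hw: "H \<subseteq> words k n" using Sw by (auto simp: H_def)
  have Hcl: "\<forall>t p j. t \<in> H \<longrightarrow> p < n \<longrightarrow> t!p > d \<longrightarrow> j \<in> {1..k} \<longrightarrow> t[p:=j] \<in> H"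
    using Scl unfolding H_def by blast
  have IHH: "real (card (?f ` H)) \<le> real (card (H \<inter> ?W)) powr a"
    using Suc.IH[OF Hw Hcl] .
  have IHF: "real (card (?f ` F)) \<le> real (card (F \<inter> ?W)) powr a"
    using Suc.IH[OF Sw Scl] unfolding F_def .
  have FS: "F \<subseteq> S b" if b: "b \<in> {1..d}" for b
  proof
    fix t assume "t \<in> F"
    hence t: "(d+1) # t \<in> G" by (simp add: F_def S_def)
    have "((d+1) # t)[0 := b] \<in> G" using Suc.prems(2)[rule_format, of "(d+1) # t" 0 b] t b dk by auto
    thus "t \<in> S b" by (simp add: S_def)
  qed
  have FH: "F \<subseteq> H"
  proof
    fix t assume "t \<in> F"
    hence "t \<in> S 1" using FS[of 1] d2 by auto
    moreover have "(1::nat) \<in> {1..d}" using d2 by simp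
    ultimately show "t \<in> H" unfolding H_def by blast
  qed
  have finG: "finite G" using Suc.prems(1) finite_words finite_subset by blast
  have finS: "finite (S b)" for b using Sw finite_words finite_subset by blast
  have finH: "finite H" using Hw finite_words finite_subset by blast
  have finF: "finite F" using finS by (simp add: F_def)
  have sub: "?f ` G \<subseteq> (Cons d) ` (?f ` H) \<union> (\<Union>c\<in>{d+1..k}. (Cons c) ` (?f ` F))"
  proof
    fix y assume "y \<in> ?f ` G"
    then obtain g where g: "g \<in> G" "y = ?f g" by auto
    have "g \<in> words k (Suc n)" using g Suc.prems(1) by auto
    then obtain b t where bt: "g = b # t" "b \<in> {1..k}"
      by (cases g) (auto simp: words_def)
    show "y \<in> (Cons d) ` (?f ` H) \<union> (\<Union>c\<in>{d+1..k}. (Cons c) ` (?f ` F))"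
    proof (cases "b \<le> d")
      case True
      have "t \<in> H" using g bt True by (auto simp: H_def S_def)
      moreover have "y = d # ?f t" using g bt True by (simp add: fmap_def)
      ultimately show ?thesis by auto
    next
      case False
      have "((b) # t)[0 := d+1] \<in> G" using Suc.prems(2)[rule_format, of "b # t" 0 "d+1"] g bt False dk by auto
      hence "t \<in> F" by (simp add: F_def S_def)
      moreover have "y = b # ?f t" using g bt False by (simp add: fmap_def)
      moreover have "b \<in> {d+1..k}" using bt False by auto
      ultimately have "y \<in> (\<Union>c\<in>{d+1..k}. (Cons c) ` (?f ` F))" by blast
      thus ?thesis by blast
    qed
  qed
  have ycard: "card (?f ` G) \<le> card (?f ` H) + (k - d) * card (?f ` F)"
  proof -
    have "card (?f ` G) \<le> card ((Cons d) ` (?f ` H) \<union> (\<Union>c\<in>{d+1..k}. (Cons c) ` (?f ` F)))"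
      using sub finH finF by (intro card_mono) auto
    also have "\<dots> \<le> card ((Cons d) ` (?f ` H)) + card (\<Union>c\<in>{d+1..k}. (Cons c) ` (?f ` F))"
      by (rule card_Un_le)
    also have "card ((Cons d) ` (?f ` H)) = card (?f ` H)" by (simp add: card_image)
    also have "card (\<Union>c\<in>{d+1..k}. (Cons c) ` (?f ` F)) \<le> (\<Sum>c\<in>{d+1..k}. card ((Cons c) ` (?f ` F)))"
      by (rule card_UN_le) simp
    also have "\<dots> = (k - d) * card (?f ` F)" by (simp add: card_image)
    finally show ?thesis by simp
  qed
  have Geq: "G \<inter> words d (Suc n) = (\<Union>b\<in>{1..d}. (Cons b) ` (S b \<inter> ?W))"
  proof
    show "G \<inter> words d (Suc n) \<subseteq> (\<Union>b\<in>{1..d}. (Cons b) ` (S b \<inter> ?W))"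
    proof
      fix g assume g: "g \<in> G \<inter> words d (Suc n)"
      then obtain b t where bt: "g = b # t" by (cases g) (auto simp: words_def)
      show "g \<in> (\<Union>b\<in>{1..d}. (Cons b) ` (S b \<inter> ?W))"
        using g bt by (auto simp: words_def S_def)
    qed
    show "(\<Union>b\<in>{1..d}. (Cons b) ` (S b \<inter> ?W)) \<subseteq> G \<inter> words d (Suc n)"
      by (auto simp: words_def S_def)
  qed
  have xcard: "card (G \<inter> words d (Suc n)) = (\<Sum>b\<in>{1..d}. card (S b \<inter> ?W))"
  proof -
    have "card (\<Union>b\<in>{1..d}. (Cons b) ` (S b \<inter> ?W)) = (\<Sum>b\<in>{1..d}. card ((Cons b) ` (S b \<inter> ?W)))"
      using finS by (intro card_UN_disjoint) auto
    also have "\<dots> = (\<Sum>b\<in>{1..d}. card (S b \<inter> ?W))" by (simp add: card_image)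
    finally show ?thesis using Geq by simp
  qed
  have HW: "H \<inter> ?W = (\<Union>b\<in>{1..d}. S b \<inter> ?W)" by (auto simp: H_def)
  have cnt: "card (H \<inter> ?W) + (d - 1) * card (F \<inter> ?W) \<le> card (G \<inter> words d (Suc n))"
  proof -
    have "card (\<Union>b\<in>{1..d}. S b \<inter> ?W) + (card {1..d} - 1) * card (F \<inter> ?W)
          \<le> (\<Sum>b\<in>{1..d}. card (S b \<inter> ?W))"
    proof (rule counting)
      show "{1..d} \<noteq> {}" using d2 by simp
      show "\<forall>b\<in>{1..d}. finite (S b \<inter> ?W) \<and> F \<inter> ?W \<subseteq> S b \<inter> ?W"
        using finS FS by blast
    qed simp
    thus ?thesis using xcard HW by simp
  qed
  have vu: "card (F \<inter> ?W) \<le> card (H \<inter> ?W)" using FH finH by (intro card_mono) auto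
  define u where "u = real (card (H \<inter> ?W))"
  define v where "v = real (card (F \<inter> ?W))"
  have ki: "u powr a + ((1 + real (d-1)) powr a - 1) * v powr a \<le> (u + real (d-1) * v) powr a"
    using vu a1 by (intro key_ineq) (auto simp: u_def v_def)
  have dd: "1 + real (d-1) = real d" using d2 by simp
  have r1: "real (card (?f ` G)) \<le> real (card (?f ` H) + (k - d) * card (?f ` F))"
    using ycard by (simp only: of_nat_le_iff)
  have r2: "real (k - d) * real (card (?f ` F)) \<le> real (k - d) * v powr a"
    by (rule mult_left_mono[OF IHF[folded v_def]]) simp
  have e1: "(1 + real (d-1)) powr a - 1 = real (k - d)"
    unfolding dd da by simp
  have ki2: "u powr a + real (k - d) * v powr a \<le> (u + real (d-1) * v) powr a"
    using ki unfolding e1 .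
  have r3: "u + real (d-1) * v \<le> real (card (G \<inter> words d (Suc n)))"
  proof -
    have "real (card (H \<inter> ?W) + (d - 1) * card (F \<inter> ?W)) \<le> real (card (G \<inter> words d (Suc n)))"
      using cnt by (simp only: of_nat_le_iff)
    thus ?thesis unfolding u_def v_def by simp
  qed
  have r4: "(u + real (d-1) * v) powr a \<le> real (card (G \<inter> words d (Suc n))) powr a"
    using r3 a1 by (intro powr_mono2) (auto simp: u_def v_def)
  have IHH': "real (card (?f ` H)) \<le> u powr a" using IHH unfolding u_def .
  have "real (card (?f ` H) + (k - d) * card (?f ` F)) = real (card (?f ` H)) + real (k - d) * real (card (?f ` F))"
    by simp
  hence "real (card (?f ` G)) \<le> real (card (?f ` H)) + real (k - d) * real (card (?f ` F))"
    using r1 by linarith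
  hence "real (card (?f ` G)) \<le> (u + real (d-1) * v) powr a"
    using r2 ki2 IHH' by linarith
  hence "real (card (?f ` G)) \<le> real (card (G \<inter> words d (Suc n))) powr a"
    using r4 by linarith
  thus ?case .
qed

theorem lemma12:
  fixes d k n :: nat and G :: "nat list set"
  assumes "2 \<le> d" and "2 * d \<le> k + 1" and "n \<ge> 1"
    and "G \<subseteq> words k n"
    and closed: "\<And>g p j. g \<in> G \<Longrightarrow> p < n \<Longrightarrow> g ! p > d \<Longrightarrow> j \<in> {1..k} \<Longrightarrow> g[p := j] \<in> G"
  shows "(card (G \<inter> words d n) = 0 \<and> card (map (fmap d) ` G) = 0) \<or>
         log (real (k - d + 1)) (real (card (map (fmap d) ` G)))
           \<le> log (real d) (real (card (G \<inter> words d n)))"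
proof -
  define M where "M = real (k - d + 1)"
  define a where "a = ln M / ln (real d)"
  have d0: "ln (real d) > 0" using assms(1) by simp
  have Md: "M \<ge> real d" using assms(2) by (simp add: M_def)
  have a1: "1 \<le> a" unfolding a_def using d0 Md assms(1) by simp
  have da: "real d powr a = M"
    unfolding a_def powr_def using d0 Md assms(1) by simp
  have ineq: "real (card (map (fmap d) ` G)) \<le> real (card (G \<inter> words d n)) powr a"
    using main[OF assms(1) _ a1, of k G n] da assms closed unfolding M_def by auto
  define x where "x = real (card (G \<inter> words d n))"
  define y where "y = real (card (map (fmap d) ` G))"
  show ?thesis
  proof (cases "x = 0")
    case True
    hence "y = 0" using ineq a1 by (simp add: x_def y_def)
    thus ?thesis using True by (simp add: x_def y_def)
  next
    case False
    hence x1: "x \<ge> 1" by (simp add: x_def)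
    have M1: "M > 1" using Md assms(1) by simp
    show ?thesis
    proof (cases "y = 0")
      case True
      hence "log M y = 0" by (simp add: log_def)
      moreover have "log (real d) x \<ge> 0" using x1 assms(1) by simp
      ultimately show ?thesis by (simp add: x_def y_def M_def)
    next
      case False
      hence y0: "y > 0" by (simp add: y_def)
      have xp: "x powr a > 0" using x1 by simp
      have "y \<le> x powr a" using ineq by (simp add: x_def y_def)
      hence "log M y \<le> log M (x powr a)"
        using log_le_cancel_iff[OF M1 y0 xp] by simp
      also have "\<dots> = a * log M x" using x1 M1 by (simp add: log_powr)
      also have "\<dots> = log (real d) x"
        unfolding a_def log_def using M1 d0 by simp
      finally have "log M y \<le> log (real d) x" .
      thus ?thesis by (simp add: x_def y_def M_def)
    qed
  qed
qed

end
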